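(* Let $\mathcal{D}$ be an abstract system of proof notations, $s\in\mathbb{N}$, and let $d\in\mathcal{D}$ be $s$-bounded in $\mathcal{D}$. Then $\mathsf Ed$ is $o(d)\cdot(s+2)$-bounded in $\mathbb{E}(\mathcal{D})$, and $\mathsf E\mathsf Ed$ is $2^{o(d)}\cdot o(d)\cdot(s+4)$-bounded in $\mathbb{E}(\mathcal{D})$.
   Context: An abstract system of proof notations is a set $\mathcal{D}$ with functions $|\cdot|,o(\cdot)\colon\mathcal{D}\to\mathbb{N}\setminus\{0\}$ (size and height) and a relation $\to\subseteq\mathcal{D}\times\mathcal{D}$ such that $d\to d'$ implies $o(d')<o(d)$. The cut-elimination closure $\mathbb{E}(\mathcal{D})$ is the abstract system of formal terms inductively generated by: every $d\in\mathcal{D}$ is in $\mathbb{E}(\mathcal{D})$ (with size and height inherited); if $d,e\in\mathbb{E}(\mathcal{D})$ then $\mathsf{I}d,\ \mathsf{R}de,\ \mathsf{E}d\in\mathbb{E}(\mathcal{D})$ ($\mathsf I,\mathsf R,\mathsf E$ new symbols), with $|\mathsf Id|=|d|+1$, $|\mathsf Rde|=|d|+|e|+1$, $|\mathsf Ed|=|d|+1$, $o(\mathsf Id)=o(d)$, $o(\mathsf Rde)=o(d)+o(e)$, $o(\mathsf Ed)=2^{o(d)}-1$. The relation $\to$ on $\mathbb{E}(\mathcal{D})$ is inductively generated by: $d\to d'$ in $\mathcal{D}$ implies $d\to d'$; $d\to d'$ implies $\mathsf Id\to\mathsf Id'$; $e\to e'$ implies $\mathsf Rde\to\mathsf Rde'$;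 $d\to d'$ implies $\mathsf Ed\to\mathsf Ed'$; $\mathsf Rde\to\mathsf Id$ always; and $d\to d'$ together with $d\to d''$ implies $\mathsf Ed\to\mathsf R(\mathsf Ed')(\mathsf Ed'')$. For an abstract system $\mathcal{X}$ (here $\mathcal{D}$ or $\mathbb{E}(\mathcal{D})$) and $x\in\mathcal{X}$, $x$ is called $t$-bounded in $\mathcal{X}$ if every $x'\in\mathcal{X}$ with $x\to^\ast x'$ (reflexive transitive closure of the relation $\to$ of $\mathcal{X}$) satisfies $|x'|\le t$. *)

theory Defs
  imports Main
begin

definition proof_notation_system ::
  "('a \<Rightarrow> nat) \<Rightarrow> ('a \<Rightarrow> nat) \<Rightarrow> ('a \<Rightarrow> 'a \<Rightarrow> bool) \<Rightarrow> bool" where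
  "proof_notation_system sz ht step \<longleftrightarrow>
     (\<forall>d. 0 < sz d) \<and> (\<forall>d. 0 < ht d) \<and> (\<forall>d d'. step d d' \<longrightarrow> ht d' < ht d)"

text \<open>Formal terms of the cut-elimination closure E(D).\<close>
datatype 'a eterm = Base 'a | I "'a eterm" | R "'a eterm" "'a eterm" | E "'a eterm"

primrec esize :: "('a \<Rightarrow> nat) \<Rightarrow> 'a eterm \<Rightarrow> nat" where
  "esize sz (Base d) = sz d"
| "esize sz (I d) = esize sz d + 1"
| "esize sz (R d e) = esize sz d + esize sz e + 1"
| "esize sz (E d) = esize sz d + 1"

primrec eheight :: "('a \<Rightarrow> nat) \<Rightarrow> 'a eterm \<Rightarrow> nat" where
  "eheight ht (Base d) = ht d"
| "eheight ht (I d) = eheight ht d"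
| "eheight ht (R d e) = eheight ht d + eheight ht e"
| "eheight ht (E d) = 2 ^ eheight ht d - 1"

inductive estep :: "('a \<Rightarrow> 'a \<Rightarrow> bool) \<Rightarrow> 'a eterm \<Rightarrow> 'a eterm \<Rightarrow> bool"
  for step :: "'a \<Rightarrow> 'a \<Rightarrow> bool" where
  base: "step d d' \<Longrightarrow> estep step (Base d) (Base d')"
| I_cong: "estep step d d' \<Longrightarrow> estep step (I d) (I d')"
| R_cong: "estep step e e' \<Longrightarrow> estep step (R d e) (R d e')"
| E_cong: "estep step d d' \<Longrightarrow> estep step (E d) (E d')"
| R_red: "estep step (R d e) (I d)"
| E_red: "estep step d d' \<Longrightarrow> estep step d d'' \<Longrightarrow> estep step (E d) (R (E d') (E d''))"

definition bounded :: "('b \<Rightarrow> 'b \<Rightarrow> bool) \<Rightarrow> ('b \<Rightarrow> nat) \<Rightarrow> nat \<Rightarrow> 'b \<Rightarrow> bool" where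
  "bounded rel sz t x \<longleftrightarrow> (\<forall>x'. rel\<^sup>*\<^sup>* x x' \<longrightarrow> sz x' \<le> t)"

end

theory Submission
  imports Defs
begin

inductive spine :: "('a eterm \<Rightarrow> bool) \<Rightarrow> 'a eterm \<Rightarrow> bool" for L where
  leaf: "L t \<Longrightarrow> spine L t"
| Icase: "spine L u \<Longrightarrow> spine L (I u)"
| Rcase: "L l \<Longrightarrow> spine L v \<Longrightarrow> spine L (R l v)"

primrec nu :: "('a eterm \<Rightarrow> nat) \<Rightarrow> 'a eterm \<Rightarrow> nat" where
  "nu m (Base x) = 0"
| "nu m (I u) = nu m u + 1"
| "nu m (R u v) = max (nu m u) (nu m v) + 1"
| "nu m (E g) = m g"

lemma spine_step:
  assumes leafH: "\<And>l t'. L l \<Longrightarrow> estep step l t' \<Longrightarrow> spine L t' \<and> nu m t' \<le> nu m l"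
  shows "spine L t \<Longrightarrow> estep step t t' \<Longrightarrow> spine L t' \<and> nu m t' \<le> nu m t"
proof (induction t arbitrary: t' rule: spine.induct)
  case (leaf t) then show ?case using leafH by blast
next
  case (Icase u)
  from Icase.prems obtain u' where "t' = I u'" "estep step u u'"
    by (cases rule: estep.cases) auto
  then show ?case using Icase.IH by (auto intro: spine.Icase)
next
  case (Rcase l v)
  from Rcase.prems have "(\<exists>v'. t' = R l v' \<and> estep step v v') \<or> t' = I l"
    by (cases rule: estep.cases) auto
  then show ?case
  proof
    assume "\<exists>v'. t' = R l v' \<and> estep step v v'"
    then obtain v' where v': "t' = R l v'" "estep step v v'" by blast
    with Rcase.IH[of v'] Rcase.hyps show ?thesis by (auto intro: spine.Rcase simp: le_max_iff_disj)
  next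
    assume "t' = I l" then show ?thesis using Rcase by (auto intro: spine.Icase spine.leaf)
  qed
qed

lemma spine_reach:
  assumes leafH: "\<And>l t'. L l \<Longrightarrow> estep step l t' \<Longrightarrow> spine L t' \<and> nu m t' \<le> nu m l"
    and "(estep step)\<^sup>*\<^sup>* t t'" and "spine L t"
  shows "spine L t' \<and> nu m t' \<le> nu m t"
  using assms(2)
proof (induction rule: rtranclp_induct)
  case base then show ?case using assms(3) by simp
next
  case (step y z)
  then show ?case using spine_step[OF leafH, where t=y and t'=z] by fastforce
qed

lemma spine_size:
  assumes "\<And>l. L l \<Longrightarrow> esize sz l + 1 \<le> C \<and> 1 \<le> nu m l" and "1 \<le> C"
  shows "spine L t \<Longrightarrow> esize sz t + 1 \<le> nu m t * C"
proof (induction t rule: spine.induct)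
  case (leaf t)
  then have "esize sz t + 1 \<le> C" "1 \<le> nu m t" using assms(1) by auto
  then show ?case by (metis dual_order.trans mult_1 mult_le_mono1)
next
  case (Icase u)
  then show ?case using assms(2) by simp
next
  case (Rcase l v)
  have l: "esize sz l + 1 \<le> C" using Rcase assms(1) by auto
  have a: "nu m v * C \<le> max (nu m l) (nu m v) * C" by (intro mult_right_mono) auto
  have b: "esize sz (R l v) + 1 = esize sz l + esize sz v + 2" by simp
  have c: "nu m (R l v) * C = max (nu m l) (nu m v) * C + C" by simp
  show ?case unfolding b c using a l Rcase.IH by linarith
qed

lemma eheight_pos: "\<forall>x. 0 < ht x \<Longrightarrow> 0 < eheight ht t"
proof (induction t)
  case (E t)
  then have "1 < (2::nat) ^ eheight ht t" using one_less_power[of "2::nat" "eheight ht t"] by auto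
  then show ?case by simp
qed auto

lemma pow_aux: "b < a \<Longrightarrow> c < a \<Longrightarrow> 0 < b \<Longrightarrow> 0 < c \<Longrightarrow> (2::nat)^b - 1 + (2^c - 1) < 2^a - 1"
proof -
  assume h: "b < a" "c < a" "0 < b" "0 < c"
  then obtain k where k: "a = Suc k" by (cases a) auto
  have "(2::nat)^b \<le> 2^k" "(2::nat)^c \<le> 2^k" using h k by (auto intro: power_increasing)
  moreover have "(2::nat)^b \<ge> 1" "(2::nat)^c \<ge> 1" by auto
  moreover have "(2::nat)^a = 2 * 2^k" using k by simp
  ultimately show ?thesis by linarith
qed

lemma eheight_dec:
  assumes pos: "\<forall>x. 0 < ht x" and dec: "\<forall>x y. step x y \<longrightarrow> ht y < ht x"
  shows "estep step t t' \<Longrightarrow> eheight ht t' < eheight ht t"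
proof (induction rule: estep.induct)
  case (base d d') then show ?case using dec by simp
next
  case (E_cong d d')
  then have "(2::nat)^eheight ht d' < 2^eheight ht d" by (intro power_strict_increasing) auto
  moreover have "(1::nat) \<le> 2^eheight ht d'" by simp
  ultimately show ?case by (simp only: eheight.simps)
next
  case (R_red d e) then show ?case using eheight_pos[OF pos, of e] by simp
next
  case (E_red d d' d'')
  then show ?case using pow_aux[of "eheight ht d'" "eheight ht d" "eheight ht d''"]
      eheight_pos[OF pos] by simp
qed auto

lemma a_le_pow: "(a::nat) \<le> 2^a - 1"
proof -
  have "a < 2^a" by (rule less_exp)
  then show ?thesis by linarith
qed

theorem mainTheorem7:
  fixes sz ht :: "'a \<Rightarrow> nat" and step :: "'a \<Rightarrow> 'a \<Rightarrow> bool" and s :: nat and d :: 'a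
  assumes "proof_notation_system sz ht step"
    and "bounded step sz s d"
  shows "bounded (estep step) (esize sz) (ht d * (s + 2)) (E (Base d))
       \<and> bounded (estep step) (esize sz) (2 ^ ht d * ht d * (s + 4)) (E (E (Base d)))"
proof -
  have pos: "\<forall>x. 0 < ht x" and dec: "\<forall>x y. step x y \<longrightarrow> ht y < ht x"
    and szpos: "\<forall>x. 0 < sz x"
    using assms(1) unfolding proof_notation_system_def by auto
  have bnd: "\<And>x. step\<^sup>*\<^sup>* d x \<Longrightarrow> sz x \<le> s" using assms(2) unfolding bounded_def by auto
  define h where "h = ht d"
  define L1 where "L1 = (\<lambda>t. \<exists>x. t = E (Base x) \<and> step\<^sup>*\<^sup>* d x)"
  define m where "m = eheight ht"
  have leaf1: "spine L1 t' \<and> nu m t' \<le> nu m l" if "L1 l" "estep step l t'" for l t'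
  proof -
    from that obtain x where x: "l = E (Base x)" "step\<^sup>*\<^sup>* d x" unfolding L1_def by auto
    from that(2) x(1) show ?thesis
    proof (cases rule: estep.cases)
      case (E_cong d0 d')
      have "estep step (Base x) d'" using E_cong x by simp
      then obtain x' where "d' = Base x'" "step x x'" by (cases rule: estep.cases) auto
      moreover have "ht x' < ht x" using calculation dec by blast
      ultimately show ?thesis using E_cong x
        by (auto simp: L1_def m_def intro!: spine.leaf elim: rtranclp.rtrancl_into_rtrancl)
    next
      case (E_red d0 d' d'')
      have "estep step (Base x) d'" "estep step (Base x) d''" using E_red x by simp_all
      then obtain x' x'' where "d' = Base x'" "step x x'" "d'' = Base x''" "step x x''"
        by (auto elim!: estep.cases)
      note xx = this
      have h: "ht x' < ht x" "ht x'' < ht x" using xx dec by blast+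
      have "L1 (E (Base x'))" "L1 (E (Base x''))" using xx x unfolding L1_def
        by (auto elim: rtranclp.rtrancl_into_rtrancl)
      then have "spine L1 (R (E (Base x')) (E (Base x'')))" by (intro spine.Rcase spine.leaf)
      then show ?thesis using E_red x xx h by (auto simp: m_def)
    qed auto
  qed
  have size1: "esize sz t + 1 \<le> nu m t * (s + 2)" if "spine L1 t" for t
    using that
  proof (rule spine_size[rotated 2])
    fix l assume "L1 l"
    then obtain x where "l = E (Base x)" "step\<^sup>*\<^sup>* d x" unfolding L1_def by auto
    then show "esize sz l + 1 \<le> s + 2 \<and> 1 \<le> nu m l" using bnd pos by (auto simp: m_def Suc_leI)
  qed simp
  have st1: "spine L1 (E (Base d))" by (auto simp: L1_def intro: spine.leaf)
  have part1: "bounded (estep step) (esize sz) (ht d * (s + 2)) (E (Base d))"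
    unfolding bounded_def
  proof (intro allI impI)
    fix t assume "(estep step)\<^sup>*\<^sup>* (E (Base d)) t"
    then have "spine L1 t \<and> nu m t \<le> nu m (E (Base d))" using spine_reach[OF leaf1 _ st1] by blast
    then have "spine L1 t" "nu m t \<le> ht d" by (auto simp: m_def)
    then have "esize sz t + 1 \<le> ht d * (s + 2)" using size1 mult_right_mono order_trans by blast
    then show "esize sz t \<le> ht d * (s + 2)" by simp
  qed
  define L2 where "L2 = (\<lambda>t. \<exists>g. t = E g \<and> spine L1 g \<and> nu m g \<le> h)"
  have leaf2: "spine L2 t' \<and> nu m t' \<le> nu m l" if "L2 l" "estep step l t'" for l t'
  proof -
    from that obtain g where g: "l = E g" "spine L1 g" "nu m g \<le> h" unfolding L2_def by auto
    from that(2) g(1) show ?thesis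
    proof (cases rule: estep.cases)
      case (E_cong d0 g')
      have "spine L1 g' \<and> nu m g' \<le> nu m g" using spine_step[OF leaf1 g(2)] E_cong g by simp
      moreover have "eheight ht g' < eheight ht g" using eheight_dec[OF pos dec] E_cong g by simp
      ultimately show ?thesis using E_cong g
        by (auto simp: L2_def m_def intro!: spine.leaf)
    next
      case (E_red d0 g' g'')
      have a: "spine L1 g' \<and> nu m g' \<le> nu m g" using spine_step[OF leaf1 g(2)] E_red g by simp
      have b: "spine L1 g'' \<and> nu m g'' \<le> nu m g" using spine_step[OF leaf1 g(2)] E_red g by simp
      have c: "eheight ht g' < eheight ht g" "eheight ht g'' < eheight ht g"
        using eheight_dec[OF pos dec] E_red g by auto
      have "eheight ht g \<le> 2 ^ eheight ht g - 1" by (rule a_le_pow)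
      then have "max (eheight ht g') (eheight ht g'') + 1 \<le> 2 ^ eheight ht g - 1" using c by simp
      moreover have "L2 (E g')" "L2 (E g'')" using a b g unfolding L2_def by auto
      then have "spine L2 (R (E g') (E g''))" by (intro spine.Rcase spine.leaf)
      ultimately show ?thesis using E_red g c by (auto simp: m_def)
    qed auto
  qed
  have size2: "esize sz t + 1 \<le> nu m t * (h * (s + 2) + 1)" if "spine L2 t" for t
    using that
  proof (rule spine_size[rotated 2])
    fix l assume "L2 l"
    then obtain g where g: "l = E g" "spine L1 g" "nu m g \<le> h" unfolding L2_def by auto
    have "esize sz g + 1 \<le> nu m g * (s + 2)" using size1 g(2) .
    also have "\<dots> \<le> h * (s + 2)" using g(3) by (rule mult_right_mono) simp
    finally have "esize sz l + 1 \<le> h * (s + 2) + 1" using g by simp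
    moreover have "1 \<le> nu m l" using g eheight_pos[OF pos, of g] by (simp add: m_def)
    ultimately show "esize sz l + 1 \<le> h * (s + 2) + 1 \<and> 1 \<le> nu m l" by simp
  qed simp
  have st2: "spine L2 (E (E (Base d)))"
    using st1 by (auto simp: L2_def m_def h_def intro!: spine.leaf)
  have part2: "bounded (estep step) (esize sz) (2 ^ ht d * ht d * (s + 4)) (E (E (Base d)))"
    unfolding bounded_def
  proof (intro allI impI)
    fix t assume "(estep step)\<^sup>*\<^sup>* (E (E (Base d))) t"
    then have "spine L2 t \<and> nu m t \<le> nu m (E (E (Base d)))" using spine_reach[OF leaf2 _ st2] by blast
    then have t: "spine L2 t" "nu m t \<le> 2 ^ h" by (auto simp: m_def h_def)
    have "esize sz t + 1 \<le> nu m t * (h * (s + 2) + 1)" using size2 t(1) .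
    also have "\<dots> \<le> 2 ^ h * (h * (s + 2) + 1)" using t(2) by (rule mult_right_mono) simp
    also have "\<dots> \<le> 2 ^ h * (h * (s + 4))"
    proof (rule mult_left_mono)
      have "1 \<le> h" using pos by (simp add: h_def Suc_leI)
      then show "h * (s + 2) + 1 \<le> h * (s + 4)" by (simp add: algebra_simps)
    qed simp
    finally show "esize sz t \<le> 2 ^ ht d * ht d * (s + 4)" by (simp add: h_def mult.assoc)
  qed
  show ?thesis using part1 part2 by simp
qed

end
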